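(* Let $p=a/b$ with $a,b$ positive coprime integers and $b\not\equiv 0\pmod 4$, and set $k'=b$ if $b$ is even, $k'=2b$ if $b$ is odd. Let $(\Delta_L^{(m)})_{m\ge 1}$ satisfy $\Delta_L^{(m+1)}=\Delta_L^{(m)}+1+2p-2\lceil\Delta_L^{(m)}\rceil$ for all $m\ge1$, with $0<|\Delta_L^{(1)}|<1/k'$. Writing $d(t)=\left|\left((t+\tfrac12)\bmod 1\right)-\tfrac12\right|$ for the distance from $t\in\mathbb{R}$ to the nearest integer, we have $$d\big(\Delta_L^{(m)}\big)>\frac{1}{k'}\quad\text{for all } m\in\{2,\dots,k'/2\}\cup\{k'/2+2,\dots,k'\},$$ and $$d\big(\Delta_L^{(k'/2+1)}\big)<\frac{1}{k'} .$$
   Context: $\lceil\cdot\rceil$ denotes the ceiling function and $t\bmod 1\in[0,1)$ the fractional part. Note $k'$ is always even. *)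

theory Defs
  imports Complex_Main
begin

definition dist_int :: "real \<Rightarrow> real" where
  "dist_int t = \<bar>frac (t + 1/2) - 1/2\<bar>"

end

theory Submission
  imports Defs
begin

lemma dist_int_eq: "dist_int t = \<bar>t - of_int \<lfloor>t + 1/2\<rfloor>\<bar>"
  unfolding dist_int_def frac_def by simp

lemma dist_int_small:
  fixes d :: real and N :: int
  assumes "\<bar>d\<bar> < 1/2"
  shows "dist_int (d + of_int N) = \<bar>d\<bar>"
proof -
  have "\<lfloor>d + of_int N + 1/2\<rfloor> = N"
    using assms by (subst floor_eq_iff) auto
  then show ?thesis by (simp add: dist_int_eq)
qed

lemma dist_int_far:
  fixes d :: real and N :: int and r c :: nat
  assumes "c > 0" "\<not> c dvd r" "\<bar>d\<bar> < 1/(2*real c)"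
  shows "dist_int (d + real r / real c + of_int N) > 1/(2*real c)"
proof -
  define n where "n = \<lfloor>d + real r / real c + of_int N + 1/2\<rfloor> - N"
  have e: "dist_int (d + real r / real c + of_int N) = \<bar>d + real r / real c - of_int n\<bar>"
    unfolding dist_int_eq n_def by simp
  have ne: "int r - n * int c \<noteq> 0"
  proof
    assume "int r - n * int c = 0"
    then have "int c dvd int r" by (metis dvd_triv_right eq_iff_diff_eq_0)
    then show False using assms(2) by simp
  qed
  then have ge1: "\<bar>real_of_int (int r - n * int c)\<bar> \<ge> 1" by linarith
  have "real r / real c - of_int n = real_of_int (int r - n * int c) / real c"
    using assms(1) by (simp add: field_simps)
  then have "\<bar>real r / real c - of_int n\<bar> = \<bar>real_of_int (int r - n * int c)\<bar> / real c"
    by simp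
  also have "\<dots> \<ge> 1 / real c" using ge1 assms(1) by (simp add: divide_right_mono)
  finally have h: "\<bar>real r / real c - of_int n\<bar> \<ge> 1 / real c" .
  have "1/(2*real c) = 1/real c - 1/(2*real c)" by simp
  moreover have "real (2*c) = 2 * real c" by simp
  moreover have "\<bar>d + (real r / real c - of_int n)\<bar> \<ge> \<bar>real r / real c - of_int n\<bar> - \<bar>d\<bar>" by arith
  ultimately show ?thesis using e h assms(3) by (simp add: algebra_simps)
qed

theorem lemma3:
  fixes a b :: nat and p :: real and k' :: nat and \<Delta> :: "nat \<Rightarrow> real"
  assumes "a > 0" and "b > 0" and "coprime a b" and "\<not> 4 dvd b"
    and "p = real a / real b"
    and "k' = (if even b then b else 2 * b)"
    and "\<And>m. m \<ge> 1 \<Longrightarrow> \<Delta> (m + 1) = \<Delta> m + 1 + 2 * p - 2 * of_int \<lceil>\<Delta> m\<rceil>"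
    and "0 < \<bar>\<Delta> 1\<bar>" and "\<bar>\<Delta> 1\<bar> < 1 / real k'"
  shows "(\<forall>m \<in> {2..k' div 2} \<union> {k' div 2 + 2..k'}. dist_int (\<Delta> m) > 1 / real k')
         \<and> dist_int (\<Delta> (k' div 2 + 1)) < 1 / real k'"
proof -
  define c where "c = k' div 2"
  define A where "A = (if even b then a else 2 * a)"
  have kc: "k' = 2 * c" using assms(6) unfolding c_def by auto
  have cpos: "c > 0" using assms(2,6) unfolding c_def by auto
  have p2: "2 * p = real A / real c"
  proof (cases "even b")
    case True
    then obtain c' where "b = 2 * c'" by blast
    then show ?thesis using True assms(5,6) unfolding c_def A_def by simp
  next
    case False
    then show ?thesis using assms(5,6) unfolding c_def A_def by simp
  qed
  have cop: "coprime A c"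
  proof (cases "even b")
    case True
    then obtain c' where b: "b = 2 * c'" by blast
    have "c = c'" using True b assms(6) unfolding c_def by simp
    then show ?thesis using assms(3) True b unfolding A_def
      by (simp add: coprime_commute coprime_mult_left_iff)
  next
    case False
    have "c = b" using False assms(6) unfolding c_def by simp
    moreover have "coprime 2 b" using False by simp
    ultimately show ?thesis using assms(3) False unfolding A_def
      by (simp add: coprime_mult_left_iff)
  qed
  have rep: "\<exists>N::int. \<Delta> m = \<Delta> 1 + real ((m - 1) * A) / real c + of_int N" if "m \<ge> 1" for m
    using that
  proof (induction m rule: nat_induct_at_least)
    case base
    show ?case by (rule exI[of _ 0]) simp
  next
    case (Suc m)
    then obtain N where N: "\<Delta> m = \<Delta> 1 + real ((m - 1) * A) / real c + of_int N" by blast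
    have "\<Delta> (Suc m) = \<Delta> m + 2 * p + of_int (1 - 2 * \<lceil>\<Delta> m\<rceil>)"
      using assms(7)[OF Suc(1)] by simp
    also have "\<dots> = \<Delta> 1 + real ((Suc m - 1) * A) / real c + of_int (N + 1 - 2 * \<lceil>\<Delta> m\<rceil>)"
      using N p2 Suc(1) cpos
      by (simp add: field_simps of_nat_diff)
    finally show ?case by blast
  qed
  have d1: "\<bar>\<Delta> 1\<bar> < 1 / (2 * real c)" using assms(9) kc by simp
  have part1: "dist_int (\<Delta> m) > 1 / real k'" if m: "m \<in> {2..c} \<union> {c + 2..k'}" for m
  proof -
    have m1: "m \<ge> 1" using m by auto
    obtain N where N: "\<Delta> m = \<Delta> 1 + real ((m - 1) * A) / real c + of_int N"
      using rep[OF m1] by blast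
    have nd: "\<not> c dvd (m - 1) * A"
    proof
      assume "c dvd (m - 1) * A"
      then have "c dvd (m - 1)" using cop
        by (metis coprime_commute coprime_dvd_mult_left_iff)
      then obtain q where q: "m - 1 = c * q" by blast
      have "0 < m - 1" "m - 1 < 2 * c" "m - 1 \<noteq> c" using m kc by auto
      moreover have "q = 0 \<or> q = 1 \<or> q \<ge> 2" by auto
      moreover have "q \<ge> 2 \<Longrightarrow> c * 2 \<le> c * q" by simp
      ultimately show False using q cpos by (cases "q = 0") auto
    qed
    show ?thesis using dist_int_far[OF cpos nd d1, of N] N kc by simp
  qed
  have part2: "dist_int (\<Delta> (c + 1)) < 1 / real k'"
  proof -
    obtain N where N: "\<Delta> (c+1) = \<Delta> 1 + real ((c + 1 - 1) * A) / real c + of_int N"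
      using rep[of "c+1"] by auto
    have "\<Delta> (c+1) = \<Delta> 1 + of_int (N + int A)" using N cpos by simp
    moreover have "1 / (2 * real c) \<le> 1/2" using cpos by (simp add: field_simps)
    then have "\<bar>\<Delta> 1\<bar> < 1/2" using d1 by linarith
    ultimately show ?thesis using dist_int_small[of "\<Delta> 1" "N + int A"] assms(9) by simp
  qed
  show ?thesis using part1 part2 unfolding c_def by auto
qed

end
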